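(* Let $X$ be a Hilbert space, $(T(t))$ a $C_0$-semigroup on $X$ with $\|T(t)\|\le Me^{-\nu t}$, $\nu>0$, $N_1,\dots,N_n\in\mathcal L(X)$, $B\in\mathcal L(\mathbb R^n,X)$, $\varphi_0\in X$, $\Xi:=\sum_{i=1}^n\|N_i\|$, and let $u$ be a control with $\|u\|_{L^2((0,\infty),(\mathbb R^n,\|\cdot\|_\infty))}<\frac{\sqrt{2\nu}}{M\Xi}$. Define $\zeta_0(t)=T(t)\varphi_0$, $\zeta_1(t)=\int_0^tT(t-s)(\sum_{i=1}^nu_i(s)N_i\zeta_0(s)+Bu(s))ds$, and $\zeta_k(t)=\int_0^tT(t-s)\sum_{i=1}^nu_i(s)N_i\zeta_{k-1}(s)ds$ for $k\ge2$. Then the Volterra series $\zeta(t)=\sum_{m=0}^\infty\zeta_m(t)$ converges uniformly on $(0,\infty)$, and $\zeta$ is the mild solution, i.e. $\zeta(t)=T(t)\varphi_0+\int_0^tT(t-s)(\sum_{i=1}^nu_i(s)N_i\zeta(s)+Bu(s))ds$ for all $t>0$. *)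

theory Defs
  imports "HOL-Analysis.Analysis"
begin

text \<open>A strongly continuous (C_0) semigroup of bounded linear operators,
  indexed by t \<ge> 0 (values at negative times are irrelevant).\<close>
definition C0_semigroup :: "(real \<Rightarrow> 'a::real_normed_vector \<Rightarrow>\<^sub>L 'a) \<Rightarrow> bool" where
  "C0_semigroup T \<longleftrightarrow>
     T 0 = id_blinfun \<and>
     (\<forall>t s. 0 \<le> t \<longrightarrow> 0 \<le> s \<longrightarrow> T (t + s) = T t o\<^sub>L T s) \<and>
     (\<forall>x. ((\<lambda>t. T t x) \<longlongrightarrow> x) (at_right 0))"

definition ctrl_term :: "('n::finite \<Rightarrow> 'a::real_normed_vector \<Rightarrow>\<^sub>L 'a) \<Rightarrow> (real \<Rightarrow> real^'n) \<Rightarrow> real \<Rightarrow> 'a \<Rightarrow> 'a" where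
  "ctrl_term N u s z = (\<Sum>i\<in>UNIV. (u s $ i) *\<^sub>R N i z)"

primrec volterra_term ::
  "(real \<Rightarrow> 'a::real_normed_vector \<Rightarrow>\<^sub>L 'a) \<Rightarrow> ('n::finite \<Rightarrow> 'a \<Rightarrow>\<^sub>L 'a) \<Rightarrow> ((real^'n) \<Rightarrow>\<^sub>L 'a)
    \<Rightarrow> (real \<Rightarrow> real^'n) \<Rightarrow> 'a \<Rightarrow> nat \<Rightarrow> real \<Rightarrow> 'a" where
  "volterra_term T N B u \<phi>0 0 t = T t \<phi>0"
| "volterra_term T N B u \<phi>0 (Suc k) t =
     integral {0..t} (\<lambda>s. T (t - s)
        (ctrl_term N u s (volterra_term T N B u \<phi>0 k s) + (if k = 0 then B (u s) else 0)))"

definition control_L2_norm :: "(real \<Rightarrow> real^'n::finite) \<Rightarrow> real" where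
  "control_L2_norm u = sqrt (LINT s:{0<..}|lborel. (infnorm (u s))\<^sup>2)"

end

theory Submission
  imports Defs
begin

lemma riemann_sum_bound:
  fixes F h :: "real \<Rightarrow> 'b::real_normed_vector" and \<phi> :: "real \<Rightarrow> real" and S :: "real set"
  assumes D: "\<D> tagged_division_of S"
    and hb: "\<forall>x\<in>S. norm (F x - h x) \<le> e * \<phi> x"
  shows "norm ((\<Sum>(x,K)\<in>\<D>. measure lborel K *\<^sub>R F x) - (\<Sum>(x,K)\<in>\<D>. measure lborel K *\<^sub>R h x))
     \<le> e * (\<Sum>(x,K)\<in>\<D>. measure lborel K *\<^sub>R \<phi> x)"
proof -
  have fin: "finite \<D>" using D by (rule tagged_division_ofD)
  have "(\<Sum>(x,K)\<in>\<D>. measure lborel K *\<^sub>R F x) - (\<Sum>(x,K)\<in>\<D>. measure lborel K *\<^sub>R h x)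
      = (\<Sum>(x,K)\<in>\<D>. measure lborel K *\<^sub>R (F x - h x))"
    by (simp add: sum_subtractf[symmetric] case_prod_unfold scaleR_diff_right)
  also have "norm \<dots> \<le> (\<Sum>(x,K)\<in>\<D>. norm (measure lborel K *\<^sub>R (F x - h x)))"
    using norm_sum[of "\<lambda>(x,K). measure lborel K *\<^sub>R (F x - h x)" \<D>] by (simp add: case_prod_unfold)
  also have "\<dots> \<le> (\<Sum>(x,K)\<in>\<D>. e * (measure lborel K *\<^sub>R \<phi> x))"
  proof (rule sum_mono)
    fix p assume p: "p \<in> \<D>"
    obtain x K where pe: "p = (x,K)" by force
    have "x \<in> K" "K \<subseteq> S" using tagged_division_ofD(2,3)[OF D p[unfolded pe]] by auto
    then have "norm (F x - h x) \<le> e * \<phi> x" using hb by auto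
    moreover have "measure lborel K \<ge> 0" by simp
    ultimately show "(case p of (x, K) \<Rightarrow> norm (measure lborel K *\<^sub>R (F x - h x))) \<le> (case p of (x, K) \<Rightarrow> e * (measure lborel K *\<^sub>R \<phi> x))"
      unfolding pe using mult_left_mono[of "norm (F x - h x)" "e * \<phi> x" "measure lborel K"]
      by (simp add: mult.left_commute)
  qed
  also have "\<dots> = e * (\<Sum>(x,K)\<in>\<D>. measure lborel K *\<^sub>R \<phi> x)"
    by (simp add: sum_distrib_left case_prod_unfold)
  finally show ?thesis .
qed

lemma integrable_weighted_approx:
  fixes F :: "real \<Rightarrow> 'b::banach" and \<phi> :: "real \<Rightarrow> real"
  assumes phi: "\<phi> integrable_on {a..b}" and phi0: "\<And>x. x \<in> {a..b} \<Longrightarrow> 0 \<le> \<phi> x"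
    and approx: "\<And>e. e > 0 \<Longrightarrow> \<exists>h. h integrable_on {a..b} \<and> (\<forall>x\<in>{a..b}. norm (F x - h x) \<le> e * \<phi> x)"
  shows "F integrable_on {a..b}"
proof -
  have box: "{a..b} = cbox a b" by simp
  define I where "I = integral {a..b} \<phi>"
  have I0: "I \<ge> 0" unfolding I_def by (rule integral_nonneg[OF phi phi0])
  have phiI: "(\<phi> has_integral I) (cbox a b)" using phi unfolding I_def box by auto
  show ?thesis unfolding box integrable_Cauchy
  proof (intro allI impI)
    fix e :: real assume e: "e > 0"
    define e' where "e' = e / (4 * (I + 2))"
    have e': "e' > 0" using e I0 unfolding e'_def by auto
    obtain h where h: "h integrable_on cbox a b" and hb: "\<forall>x\<in>cbox a b. norm (F x - h x) \<le> e' * \<phi> x"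
      using approx[OF e'] by auto
    obtain \<gamma>1 where g1: "gauge \<gamma>1" and g1b: "\<And>\<D>. \<D> tagged_division_of (cbox a b) \<and> \<gamma>1 fine \<D> \<Longrightarrow>
        norm ((\<Sum>(x, k)\<in>\<D>. measure lborel k *\<^sub>R \<phi> x) - I) < 1"
      using phiI[unfolded has_integral, rule_format, of 1] by auto
    obtain \<gamma>2 where g2: "gauge \<gamma>2" and g2b: "\<And>\<D>1 \<D>2. \<D>1 tagged_division_of (cbox a b) \<and> \<gamma>2 fine \<D>1 \<and>
            \<D>2 tagged_division_of (cbox a b) \<and> \<gamma>2 fine \<D>2 \<Longrightarrow>
            norm ((\<Sum>(x,K)\<in>\<D>1. measure lborel K *\<^sub>R h x) - (\<Sum>(x,K)\<in>\<D>2. measure lborel K *\<^sub>R h x)) < e/2"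
      using h[unfolded integrable_Cauchy, rule_format, of "e/2"] e by auto
    have one: "norm ((\<Sum>(x,K)\<in>\<D>. measure lborel K *\<^sub>R F x) - (\<Sum>(x,K)\<in>\<D>. measure lborel K *\<^sub>R h x)) \<le> e' * (I + 1)"
      if D: "\<D> tagged_division_of (cbox a b)" "\<gamma>1 fine \<D>" for \<D>
    proof -
      have "norm ((\<Sum>(x,K)\<in>\<D>. measure lborel K *\<^sub>R F x) - (\<Sum>(x,K)\<in>\<D>. measure lborel K *\<^sub>R h x))
          \<le> e' * (\<Sum>(x,K)\<in>\<D>. measure lborel K *\<^sub>R \<phi> x)"
        by (rule riemann_sum_bound[OF D(1) hb])
      also have "\<dots> \<le> e' * (I + 1)"
      proof -
        have "norm ((\<Sum>(x, k)\<in>\<D>. measure lborel k *\<^sub>R \<phi> x) - I) < 1" using g1b D by blast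
        then have "(\<Sum>(x, k)\<in>\<D>. measure lborel k *\<^sub>R \<phi> x) \<le> I + 1"
          unfolding real_norm_def by linarith
        then show ?thesis using e' by (intro mult_left_mono) auto
      qed
      finally show ?thesis .
    qed
    show "\<exists>\<gamma>. gauge \<gamma> \<and>
          (\<forall>\<D>1 \<D>2. \<D>1 tagged_division_of (cbox a b) \<and> \<gamma> fine \<D>1 \<and>
            \<D>2 tagged_division_of (cbox a b) \<and> \<gamma> fine \<D>2 \<longrightarrow>
            norm ((\<Sum>(x,K)\<in>\<D>1. measure lborel K *\<^sub>R F x) - (\<Sum>(x,K)\<in>\<D>2. measure lborel K *\<^sub>R F x)) < e)"
    proof (intro exI[of _ "\<lambda>x. \<gamma>1 x \<inter> \<gamma>2 x"] conjI allI impI)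
      show "gauge (\<lambda>x. \<gamma>1 x \<inter> \<gamma>2 x)" using g1 g2 by (rule gauge_Int)
      fix \<D>1 \<D>2
      assume A: "\<D>1 tagged_division_of (cbox a b) \<and> (\<lambda>x. \<gamma>1 x \<inter> \<gamma>2 x) fine \<D>1 \<and>
            \<D>2 tagged_division_of (cbox a b) \<and> (\<lambda>x. \<gamma>1 x \<inter> \<gamma>2 x) fine \<D>2"
      then have f1: "\<gamma>1 fine \<D>1" "\<gamma>2 fine \<D>1" "\<gamma>1 fine \<D>2" "\<gamma>2 fine \<D>2"
        by (auto simp: fine_Int)
      let ?SF1 = "\<Sum>(x,K)\<in>\<D>1. measure lborel K *\<^sub>R F x" and ?SF2 = "\<Sum>(x,K)\<in>\<D>2. measure lborel K *\<^sub>R F x"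
      let ?Sh1 = "\<Sum>(x,K)\<in>\<D>1. measure lborel K *\<^sub>R h x" and ?Sh2 = "\<Sum>(x,K)\<in>\<D>2. measure lborel K *\<^sub>R h x"
      have n1: "norm (?SF1 - ?Sh1) \<le> e' * (I + 1)" using one A f1 by blast
      have n2: "norm (?SF2 - ?Sh2) \<le> e' * (I + 1)" using one A f1 by blast
      have n3: "norm (?Sh1 - ?Sh2) < e/2" using g2b A f1 by blast
      have "norm (?SF1 - ?SF2) \<le> norm (?SF1 - ?Sh1) + norm (?Sh1 - ?Sh2) + norm (?SF2 - ?Sh2)"
      proof -
        have eq: "?SF1 - ?SF2 = ((?SF1 - ?Sh1) + (?Sh1 - ?Sh2)) - (?SF2 - ?Sh2)" by simp
        have "norm (((?SF1 - ?Sh1) + (?Sh1 - ?Sh2)) - (?SF2 - ?Sh2)) \<le> norm ((?SF1 - ?Sh1) + (?Sh1 - ?Sh2)) + norm (?SF2 - ?Sh2)"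
          by (rule norm_triangle_ineq4)
        also have "\<dots> \<le> norm (?SF1 - ?Sh1) + norm (?Sh1 - ?Sh2) + norm (?SF2 - ?Sh2)"
          using norm_triangle_ineq by (rule add_right_mono)
        finally show ?thesis unfolding eq .
      qed
      also have "\<dots> < e' * (I + 1) + e/2 + e' * (I + 1)" using n1 n2 n3 by linarith
      also have "e' * (I + 1) = e * (I + 1) / (4 * (I + 2))" unfolding e'_def by simp
      also have "\<dots> \<le> e / 4" using e I0 by (simp add: field_simps)
      finally show "norm (?SF1 - ?SF2) < e" by linarith
    qed
  qed
qed

lemma floor_step_facts:
  fixes a b s :: real and n :: nat
  assumes ab: "a < b" and n: "n > 0" and s: "s \<in> {a..b}"
  defines "j \<equiv> nat \<lfloor>(s - a) * real n / (b - a)\<rfloor>"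
  shows "j \<le> n" "a + (b - a) * real j / real n \<in> {a..b}"
    "\<bar>s - (a + (b - a) * real j / real n)\<bar> < (b - a) / real n"
proof -
  define r where "r = (s - a) * real n / (b - a)"
  have r0: "r \<ge> 0" using ab s n unfolding r_def by auto
  have rn: "r \<le> real n" using ab s n unfolding r_def by (auto simp: field_simps)
  have jr: "real j \<le> r" "r < real j + 1" unfolding j_def r_def[symmetric]
    using r0 by (auto simp: of_nat_nat)
  show "j \<le> n" using jr rn by linarith
  have sx: "s = a + (b - a) * r / real n" unfolding r_def using ab n by (simp add: field_simps)
  have "(b - a) * real j / real n \<le> (b - a) * r / real n"
    using jr ab n by (intro divide_right_mono mult_left_mono) auto
  moreover have "(b - a) * r / real n < (b - a) * (real j + 1) / real n"
    using jr ab n by (intro divide_strict_right_mono mult_strict_left_mono) auto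
  moreover have "(b - a) * real j / real n \<ge> 0" using ab by auto
  moreover have "(b - a) * (real j + 1) / real n = (b - a) * real j / real n + (b - a) / real n"
    by (simp add: add_divide_distrib[symmetric] algebra_simps)
  ultimately show "a + (b - a) * real j / real n \<in> {a..b}"
    "\<bar>s - (a + (b - a) * real j / real n)\<bar> < (b - a) / real n"
    using s sx by auto
qed

lemma integrable_scaleR_cont:
  fixes f :: "real \<Rightarrow> real" and g :: "real \<Rightarrow> 'b::banach"
  assumes f: "f absolutely_integrable_on {a..b}" and g: "continuous_on {a..b} g"
  shows "(\<lambda>s. f s *\<^sub>R g s) integrable_on {a..b}"
proof (cases "a < b")
  case False
  then have "negligible {a..b}" by (cases "a = b") auto
  then have "((\<lambda>s. f s *\<^sub>R g s) has_integral 0) {a..b}"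
    by (rule has_integral_negligible) auto
  then show ?thesis unfolding integrable_on_def by blast
next
  case ab: True
  have fi: "f integrable_on {a..b}" and afi: "(\<lambda>x. \<bar>f x\<bar>) integrable_on {a..b}"
    using f unfolding absolutely_integrable_on_def by auto
  have uc: "uniformly_continuous_on {a..b} g"
    using g by (intro compact_uniformly_continuous) auto
  show ?thesis
  proof (rule integrable_weighted_approx[OF afi])
    fix e :: real assume e: "e > 0"
    obtain d where d: "d > 0" and dd: "\<And>x x'. x \<in> {a..b} \<Longrightarrow> x' \<in> {a..b} \<Longrightarrow> dist x' x < d \<Longrightarrow> dist (g x') (g x) < e"
      using uc[unfolded uniformly_continuous_on_def, rule_format, OF e] by metis
    obtain n :: nat where n: "(b - a) / d < real n" using reals_Archimedean2 by blast
    have n0: "n > 0" using n ab d by (cases n) (auto simp: field_simps)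
    have nd: "(b - a) / real n < d" using n n0 d ab by (auto simp: field_simps)
    define J where "J s = nat \<lfloor>(s - a) * real n / (b - a)\<rfloor>" for s
    define X where "X j = a + (b - a) * real j / real n" for j
    define h where "h s = (\<Sum>j\<in>{..n}. (if J s = j then f s else 0) *\<^sub>R g (X j))" for s
    have meas: "{s. J s = j} \<in> sets lebesgue" for j
    proof -
      have "{s. J s = j} \<in> sets borel" unfolding J_def by measurable
      then show ?thesis by simp
    qed
    have "h integrable_on {a..b}" unfolding h_def
    proof (intro integrable_sum integrable_on_scaleR_left)
      fix j
      have "set_integrable lebesgue {a..b} f" using f by simp
      then have "set_integrable lebesgue ({s. J s = j} \<inter> {a..b}) f"
        by (rule set_integrable_subset) (use meas in auto)
      then have "f integrable_on ({s. J s = j} \<inter> {a..b})"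
        by (rule set_lebesgue_integral_eq_integral)
      then show "(\<lambda>s. if J s = j then f s else 0) integrable_on {a..b}"
        using integrable_restrict_Int[of "{s. J s = j}" f "{a..b}"] by simp
    qed auto
    moreover have "norm (f x *\<^sub>R g x - h x) \<le> e * \<bar>f x\<bar>" if x: "x \<in> {a..b}" for x
    proof -
      note FF = floor_step_facts[OF ab n0 x]
      have hx: "h x = f x *\<^sub>R g (X (J x))"
        unfolding h_def using FF(1) J_def by (simp add: if_distrib[of "\<lambda>c. c *\<^sub>R _"] sum.delta' cong: if_cong)
      have "dist (g x) (g (X (J x))) < e"
        using FF nd x unfolding X_def J_def by (intro dd) (auto simp: dist_real_def)
      then have "norm (g x - g (X (J x))) \<le> e" by (simp add: dist_norm)
      then have "\<bar>f x\<bar> * norm (g x - g (X (J x))) \<le> \<bar>f x\<bar> * e" by (intro mult_left_mono) auto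
      then show ?thesis unfolding hx by (simp add: scaleR_diff_right[symmetric] mult.commute)
    qed
    ultimately show "\<exists>h. h integrable_on {a..b} \<and> (\<forall>x\<in>{a..b}. norm (f x *\<^sub>R g x - h x) \<le> e * \<bar>f x\<bar>)"
      by blast
  qed auto
qed

locale sgp =
  fixes T :: "real \<Rightarrow> 'a::banach \<Rightarrow>\<^sub>L 'a" and M \<nu> :: real
  assumes sg: "C0_semigroup T"
    and bound: "\<forall>t\<ge>0. norm (T t) \<le> M * exp (- \<nu> * t)"
    and nu_pos: "\<nu> > 0"
begin

lemma T0: "T 0 = id_blinfun" using sg unfolding C0_semigroup_def by blast

lemma Tadd: "0 \<le> t \<Longrightarrow> 0 \<le> s \<Longrightarrow> T (t + s) x = T t (T s x)"
  using sg unfolding C0_semigroup_def by simp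

lemma Tlim: "((\<lambda>t. T t x) \<longlongrightarrow> x) (at_right 0)"
  using sg unfolding C0_semigroup_def by blast

lemma M_nonneg: "M \<ge> 0"
proof -
  have "norm (T 0) \<le> M" using bound by force
  then show ?thesis using norm_ge_zero[of "T 0"] by linarith
qed

lemma normT: "t \<ge> 0 \<Longrightarrow> norm (T t) \<le> M"
proof -
  assume t: "t \<ge> 0"
  have "exp (- \<nu> * t) \<le> 1" using t nu_pos by simp
  then have "M * exp (- \<nu> * t) \<le> M" using M_nonneg by (simp add: mult_left_le)
  then show ?thesis using bound t by force
qed

lemma normTx: "t \<ge> 0 \<Longrightarrow> norm (T t x) \<le> M * norm x"
  using norm_blinfun[of "T t" x] normT[of t] by (meson mult_right_mono norm_ge_zero order_trans)

lemma normTx_exp: "t \<ge> 0 \<Longrightarrow> norm (T t x) \<le> M * exp (- \<nu> * t) * norm x"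
  using norm_blinfun[of "T t" x] bound by (meson mult_right_mono norm_ge_zero order_trans)

lemma T_cont: "continuous_on {0..} (\<lambda>t. T t x)"
  unfolding continuous_on_iff
proof (intro ballI allI impI)
  fix t e :: real assume t: "t \<in> {0..}" and e: "e > 0"
  have "eventually (\<lambda>h. dist (T h x) x < e / (M + 1)) (at_right 0)"
    using Tlim[of x] e M_nonneg by (auto simp: tendsto_iff)
  then obtain b where b: "b > 0" and bb: "\<And>h. h > 0 \<Longrightarrow> h < b \<Longrightarrow> dist (T h x) x < e / (M + 1)"
    unfolding eventually_at_right_field by auto
  have key: "norm (T h x - x) * M < e" if "0 < h" "h < b" for h
  proof -
    have "norm (T h x - x) < e / (M + 1)" using bb[OF that] by (simp add: dist_norm)
    then have "norm (T h x - x) * M \<le> e / (M + 1) * M" using M_nonneg by (intro mult_right_mono) auto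
    also have "\<dots> < e" using e M_nonneg by (simp add: field_simps)
    finally show ?thesis .
  qed
  show "\<exists>d>0. \<forall>t'\<in>{0..}. dist t' t < d \<longrightarrow> dist (T t' x) (T t x) < e"
  proof (intro exI[of _ b] conjI ballI impI b)
    fix t' :: real assume t': "t' \<in> {0..}" and d: "dist t' t < b"
    consider "t' = t" | "t < t'" | "t' < t" by linarith
    then show "dist (T t' x) (T t x) < e"
    proof cases
      case 1 then show ?thesis using e by simp
    next
      case 2
      have "T t' x = T t (T (t' - t) x)" using Tadd[of t "t' - t" x] t 2 by simp
      then have "dist (T t' x) (T t x) = norm (T t (T (t' - t) x - x))"
        by (simp add: dist_norm blinfun.diff_right)
      also have "\<dots> \<le> M * norm (T (t' - t) x - x)" using normTx t by auto
      also have "\<dots> < e" using key[of "t' - t"] 2 d by (simp add: dist_real_def mult.commute)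
      finally show ?thesis .
    next
      case 3
      have "T t x = T t' (T (t - t') x)" using Tadd[of t' "t - t'" x] t' 3 by simp
      then have "dist (T t' x) (T t x) = norm (T t' (T (t - t') x - x))"
        by (simp add: dist_norm blinfun.diff_right norm_minus_commute)
      also have "\<dots> \<le> M * norm (T (t - t') x - x)" using normTx t' by auto
      also have "\<dots> < e" using key[of "t - t'"] 3 d by (simp add: dist_real_def mult.commute)
      finally show ?thesis .
    qed
  qed
qed

lemma T_joint:
  fixes r :: "'b::topological_space \<Rightarrow> real"
  assumes r: "continuous_on S r" and y: "continuous_on S y" and r0: "\<And>s. s \<in> S \<Longrightarrow> r s \<ge> 0"
  shows "continuous_on S (\<lambda>s. T (r s) (y s))"
  unfolding continuous_on_def
proof
  fix s0 assume s0: "s0 \<in> S"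
  have c1: "((\<lambda>s. T (r s) (y s0)) \<longlongrightarrow> T (r s0) (y s0)) (at s0 within S)"
    using continuous_on_compose2[OF T_cont[of "y s0"] r] r0 s0
    unfolding continuous_on_def by auto
  have yl: "((\<lambda>s. y s - y s0) \<longlongrightarrow> 0) (at s0 within S)"
    using y s0 unfolding continuous_on_def by (simp add: tendsto_diff[where b="y s0", of y _ _ "\<lambda>_. y s0", simplified] LIM_zero)
  have c2: "((\<lambda>s. T (r s) (y s - y s0)) \<longlongrightarrow> 0) (at s0 within S)"
  proof (rule Lim_null_comparison)
    show "eventually (\<lambda>s. norm (T (r s) (y s - y s0)) \<le> M * norm (y s - y s0)) (at s0 within S)"
      unfolding eventually_at_filter using r0 normTx by (auto intro!: always_eventually)
    show "((\<lambda>s. M * norm (y s - y s0)) \<longlongrightarrow> 0) (at s0 within S)"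
      using tendsto_mult_right_zero[OF tendsto_norm_zero[OF yl]] by simp
  qed
  have "((\<lambda>s. T (r s) (y s - y s0) + T (r s) (y s0)) \<longlongrightarrow> 0 + T (r s0) (y s0)) (at s0 within S)"
    by (rule tendsto_add[OF c2 c1])
  then show "((\<lambda>s. T (r s) (y s)) \<longlongrightarrow> T (r s0) (y s0)) (at s0 within S)"
    by (simp add: blinfun.diff_right)
qed

end

context sgp begin

lemma conv_int:
  assumes w: "w absolutely_integrable_on {0..t}" and c: "continuous_on {0..t} c"
  shows "(\<lambda>s. w s *\<^sub>R T (t - s) (c s)) integrable_on {0..t}"
proof (rule integrable_scaleR_cont[OF w])
  show "continuous_on {0..t} (\<lambda>s. T (t - s) (c s))"
    by (rule T_joint[OF _ c]) (auto intro!: continuous_intros)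
qed

lemma abs_int_sub:
  fixes w :: "real \<Rightarrow> real"
  assumes "w absolutely_integrable_on {a..b}" "{c..d} \<subseteq> {a..b}"
  shows "w absolutely_integrable_on {c..d}"
  by (rule set_integrable_subset[OF assms(1)[unfolded absolutely_integrable_on_def[symmetric]]]) (use assms(2) in auto)

lemma conv_cont:
  fixes w :: "real \<Rightarrow> real"
  assumes w: "\<And>t. t \<ge> 0 \<Longrightarrow> w absolutely_integrable_on {0..t}" and c: "continuous_on {0..} c"
  shows "continuous_on {0..} (\<lambda>t. integral {0..t} (\<lambda>s. w s *\<^sub>R T (t - s) (c s)))"
  unfolding continuous_on_iff
proof (intro ballI allI impI)
  fix t0 e :: real assume t0: "t0 \<in> {0..}" and e: "e > 0"
  define R where "R = t0 + 1"
  have R0: "R \<ge> 0" using t0 unfolding R_def by auto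
  define F where "F t s = w s *\<^sub>R T (t - s) (c s)" for t s
  define Z where "Z t = integral {0..t} (F t)" for t
  define W where "W x = integral {0..x} (\<lambda>s. \<bar>w s\<bar>)" for x
  have cc: "continuous_on {0..t} c" for t using c by (rule continuous_on_subset) auto
  have aw: "(\<lambda>s. \<bar>w s\<bar>) integrable_on {0..t}" if "t \<ge> 0" for t
    using w[OF that] unfolding absolutely_integrable_on_def by auto
  have Fi: "F t integrable_on {0..t}" if "t \<ge> 0" for t
    unfolding F_def by (rule conv_int[OF w[OF that] cc])
  have Wc: "continuous_on {0..R} W" unfolding W_def by (rule indefinite_integral_continuous_1[OF aw[OF R0]])
  have WR: "W t \<le> W R" if "0 \<le> t" "t \<le> R" for t
    unfolding W_def using that by (intro integral_subset_le) (auto intro: aw)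
  have W0: "W t \<ge> 0" if "0 \<le> t" for t unfolding W_def using aw[OF that] by (intro integral_nonneg) auto
  obtain C where C: "C > 0" and Cb: "\<And>s. s \<in> {0..R} \<Longrightarrow> norm (c s) \<le> C"
  proof -
    have "compact (c ` {0..R})" by (intro compact_continuous_image cc) auto
    then have "bounded (c ` {0..R})" by (rule compact_imp_bounded)
    then show ?thesis using that unfolding bounded_pos by auto
  qed
  define K where "K = {0..R} \<times> {0..R}"
  define \<Phi> where "\<Phi> p = T (fst p) (c (snd p))" for p :: "real \<times> real"
  have "continuous_on K \<Phi>" unfolding \<Phi>_def
  proof (rule T_joint)
    show "continuous_on K fst" by (rule continuous_on_fst[OF continuous_on_id])
    show "continuous_on K (\<lambda>x. c (snd x))"
      by (rule continuous_on_compose2[OF c continuous_on_snd[OF continuous_on_id]]) (auto simp: K_def)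
  qed (auto simp: K_def)
  then have "uniformly_continuous_on K \<Phi>"
    by (intro compact_uniformly_continuous) (auto simp: K_def intro: compact_Times)
  moreover define e1 where "e1 = e / (2 * (W R + 1))"
  moreover have e1: "e1 > 0" using e W0[OF R0] unfolding e1_def by auto
  ultimately obtain d1 where d1: "d1 > 0" and dd1: "\<And>p p'. p \<in> K \<Longrightarrow> p' \<in> K \<Longrightarrow> dist p' p < d1 \<Longrightarrow> dist (\<Phi> p') (\<Phi> p) < e1"
    unfolding uniformly_continuous_on_def by metis
  define e2 where "e2 = e / (2 * (M * C + 1))"
  have MC: "M * C \<ge> 0" using M_nonneg C by auto
  have e2: "e2 > 0" using e MC unfolding e2_def by auto
  obtain d2 where d2: "d2 > 0" and dd2: "\<And>t. t \<in> {0..R} \<Longrightarrow> dist t t0 < d2 \<Longrightarrow> dist (W t) (W t0) < e2"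
    using Wc[unfolded continuous_on_iff, rule_format, of t0 e2] e2 t0 unfolding R_def by auto
  have est: "norm (Z t' - Z t) \<le> e1 * W R + M * C * (W t' - W t)"
    if tt: "0 \<le> t" "t \<le> t'" "t' \<le> R" "t' - t < d1" for t t'
  proof -
    have Fi': "F t' integrable_on {0..t'}" using Fi tt by auto
    have Fi1: "F t' integrable_on {0..t}" "F t' integrable_on {t..t'}"
      using integrable_subinterval_real[OF Fi'] tt by auto
    have "Z t' = integral {0..t} (F t') + integral {t..t'} (F t')"
      unfolding Z_def using Henstock_Kurzweil_Integration.integral_combine[OF tt(1) tt(2) Fi'] by simp
    then have eqZ: "Z t' - Z t = integral {0..t} (\<lambda>s. F t' s - F t s) + integral {t..t'} (F t')"
      unfolding Z_def using integral_diff[OF Fi1(1) Fi[OF tt(1)]] by simp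
    have n1: "norm (integral {0..t} (\<lambda>s. F t' s - F t s)) \<le> integral {0..t} (\<lambda>s. e1 * \<bar>w s\<bar>)"
    proof (rule integral_norm_bound_integral)
      show "(\<lambda>s. F t' s - F t s) integrable_on {0..t}" using Fi1(1) Fi[OF tt(1)] by (rule integrable_diff)
      show "(\<lambda>s. e1 * \<bar>w s\<bar>) integrable_on {0..t}" using integrable_cmul[OF aw[OF tt(1)], of e1] by simp
      fix s assume s: "s \<in> {0..t}"
      have "F t' s - F t s = w s *\<^sub>R (\<Phi> (t' - s, s) - \<Phi> (t - s, s))"
        unfolding F_def \<Phi>_def by (simp add: scaleR_diff_right)
      moreover have "dist (\<Phi> (t' - s, s)) (\<Phi> (t - s, s)) < e1"
        using s tt by (intro dd1) (auto simp: K_def dist_Pair_Pair dist_real_def)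
      ultimately have "norm (F t' s - F t s) \<le> \<bar>w s\<bar> * e1"
        by (simp add: dist_norm mult_left_mono)
      then show "norm (F t' s - F t s) \<le> e1 * \<bar>w s\<bar>" by (simp add: mult.commute)
    qed
    have "integral {0..t} (\<lambda>s. e1 * \<bar>w s\<bar>) = e1 * W t" unfolding W_def by simp
    also have "\<dots> \<le> e1 * W R" using WR[of t] tt e1 by (intro mult_left_mono) auto
    finally have n1': "norm (integral {0..t} (\<lambda>s. F t' s - F t s)) \<le> e1 * W R" using n1 by linarith
    have awi: "(\<lambda>s. \<bar>w s\<bar>) integrable_on {t..t'}"
      using integrable_subinterval_real[OF aw[of t']] tt by auto
    have n2: "norm (integral {t..t'} (F t')) \<le> integral {t..t'} (\<lambda>s. (M * C) * \<bar>w s\<bar>)"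
    proof (rule integral_norm_bound_integral[OF Fi1(2)])
      show "(\<lambda>s. (M * C) * \<bar>w s\<bar>) integrable_on {t..t'}" using integrable_cmul[OF awi, of "M * C"] by simp
      fix s assume s: "s \<in> {t..t'}"
      have "norm (T (t' - s) (c s)) \<le> M * norm (c s)" using s by (intro normTx) auto
      also have "\<dots> \<le> M * C" using Cb[of s] s tt M_nonneg by (intro mult_left_mono) auto
      finally have "\<bar>w s\<bar> * norm (T (t' - s) (c s)) \<le> \<bar>w s\<bar> * (M * C)" by (intro mult_left_mono) auto
      then show "norm (F t' s) \<le> (M * C) * \<bar>w s\<bar>" unfolding F_def by (simp add: mult.commute)
    qed
    have IW: "integral {t..t'} (\<lambda>s. \<bar>w s\<bar>) = W t' - W t"
      unfolding W_def using Henstock_Kurzweil_Integration.integral_combine[OF tt(1) tt(2) aw[of t']] tt by simp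
    have eqI: "integral {t..t'} (\<lambda>s. (M * C) * \<bar>w s\<bar>) = (M * C) * integral {t..t'} (\<lambda>s. \<bar>w s\<bar>)"
      by (rule integral_mult[OF awi, symmetric])
    have n2': "norm (integral {t..t'} (F t')) \<le> M * C * (W t' - W t)" using n2 unfolding eqI IW .
    show ?thesis unfolding eqZ using norm_triangle_ineq[of "integral {0..t} (\<lambda>s. F t' s - F t s)" "integral {t..t'} (F t')"] n1' n2'
      by linarith
  qed
  show "\<exists>d>0. \<forall>t'\<in>{0..}. dist t' t0 < d \<longrightarrow> dist (integral {0..t'} (\<lambda>s. w s *\<^sub>R T (t' - s) (c s))) (integral {0..t0} (\<lambda>s. w s *\<^sub>R T (t0 - s) (c s))) < e"
  proof (intro exI[of _ "min 1 (min d1 d2)"] conjI ballI impI)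
    show "min 1 (min d1 d2) > 0" using d1 d2 by auto
    fix t' :: real assume t': "t' \<in> {0..}" and dt: "dist t' t0 < min 1 (min d1 d2)"
    have t'R: "t' \<in> {0..R}" using t' dt unfolding R_def by (auto simp: dist_real_def)
    have t0R: "t0 \<le> R" unfolding R_def by simp
    have dW: "\<bar>W t' - W t0\<bar> < e2" using dd2[OF t'R] dt by (auto simp: dist_real_def)
    have "norm (Z t' - Z t0) \<le> e1 * W R + M * C * \<bar>W t' - W t0\<bar>"
    proof (cases "t0 \<le> t'")
      case True
      then have "norm (Z t' - Z t0) \<le> e1 * W R + M * C * (W t' - W t0)"
        using est[of t0 t'] t0 t'R dt by (auto simp: dist_real_def)
      moreover have "M * C * (W t' - W t0) \<le> M * C * \<bar>W t' - W t0\<bar>" by (rule mult_left_mono[OF abs_ge_self MC])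
      ultimately show ?thesis by linarith
    next
      case False
      then have "norm (Z t0 - Z t') \<le> e1 * W R + M * C * (W t0 - W t')"
        using est[of t' t0] t' t0R dt by (auto simp: dist_real_def)
      moreover have "M * C * (W t0 - W t') \<le> M * C * \<bar>W t' - W t0\<bar>" by (rule mult_left_mono[OF _ MC]) auto
      ultimately show ?thesis by (simp add: norm_minus_commute)
    qed
    also have "e1 * W R < e / 2"
      using e W0[OF R0] unfolding e1_def by (simp add: field_simps)
    also have "M * C * \<bar>W t' - W t0\<bar> \<le> M * C * e2" using dW MC by (intro mult_left_mono) auto
    also have "M * C * e2 < e / 2" using MC e unfolding e2_def by (simp add: field_simps)
    finally show "dist (integral {0..t'} (\<lambda>s. w s *\<^sub>R T (t' - s) (c s))) (integral {0..t0} (\<lambda>s. w s *\<^sub>R T (t0 - s) (c s))) < e"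
      unfolding Z_def F_def dist_norm by simp
  qed
qed

end

locale ctrl =
  fixes u :: "real \<Rightarrow> real^'n::finite"
  assumes u_meas: "set_borel_measurable lborel {0<..} u"
    and u_L2: "set_integrable lborel {0<..} (\<lambda>s. (infnorm (u s))\<^sup>2)"
begin

definition L2 where "L2 = (LINT s:{0<..}|lborel. (infnorm (u s))\<^sup>2)"

definition sq where "sq s = (if s \<in> {0<..} then (infnorm (u s))\<^sup>2 else 0)" for s :: real

lemma sq_UNIV: "sq integrable_on UNIV" "integral UNIV sq = L2"
proof -
  note X = set_borel_integral_eq_integral[OF u_L2]
  show "sq integrable_on UNIV" unfolding sq_def[abs_def] by (rule integrable_restrict_UNIV[THEN iffD2, OF X(1)])
  show "integral UNIV sq = L2" unfolding sq_def L2_def X(2)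
    by (rule Henstock_Kurzweil_Integration.integral_restrict_UNIV)
qed

lemma sq_nonneg: "sq s \<ge> 0" unfolding sq_def by auto

lemma sq_int: "sq integrable_on {a..b}"
  by (rule integrable_on_subinterval[OF sq_UNIV(1)]) auto

lemma L2_nonneg: "L2 \<ge> 0"
  using integral_nonneg[OF sq_UNIV(1)] sq_nonneg sq_UNIV(2) by auto

lemma sq_int_le: "integral {a..b} sq \<le> L2"
  unfolding sq_UNIV(2)[symmetric]
  by (rule integral_subset_le) (auto intro: sq_int sq_UNIV sq_nonneg)

lemma sq_eq: "x \<in> {0..t} - {0} \<Longrightarrow> (infnorm (u x))\<^sup>2 = sq x"
  unfolding sq_def by auto

lemma usq_int: "(\<lambda>s. (infnorm (u s))\<^sup>2) integrable_on {0..t}"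
  by (rule integrable_spike[OF sq_int negligible_sing[of 0] sq_eq])

lemma usq_int_le: "integral {0..t} (\<lambda>s. (infnorm (u s))\<^sup>2) \<le> L2"
proof -
  have "integral {0..t} sq = integral {0..t} (\<lambda>s. (infnorm (u s))\<^sup>2)"
    by (rule integral_spike[OF negligible_sing[of 0]]) (rule sq_eq)
  then show ?thesis using sq_int_le[of 0 t] by simp
qed

definition v where "v s = indicator {0<..} s *\<^sub>R u s" for s

lemma v_meas: "v \<in> borel_measurable (lebesgue_on S)"
  unfolding v_def
  by (rule measurable_restrict_space1[OF measurable_completion[OF u_meas[unfolded set_borel_measurable_def]]])

lemma bnd_int: "(\<lambda>s. 1 + sq s) integrable_on {a..b}"
  by (intro integrable_add sq_int) auto

lemma x_le_sq: "\<bar>x\<bar> \<le> 1 + x\<^sup>2" for x :: real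
proof (cases "\<bar>x\<bar> \<le> 1")
  case True then show ?thesis by (simp add: add_increasing2)
next
  case False
  have "\<bar>x\<bar> * 1 \<le> \<bar>x\<bar> * \<bar>x\<bar>" using False by (intro mult_left_mono) auto
  also have "\<bar>x\<bar> * \<bar>x\<bar> = x\<^sup>2" by (simp add: power2_eq_square)
  finally show ?thesis by simp
qed

lemma v_bnd: "\<bar>infnorm (v s)\<bar> \<le> 1 + sq s"
proof (cases "s > 0")
  case True
  then show ?thesis unfolding v_def sq_def using x_le_sq[of "infnorm (u s)"] by simp
next
  case False
  then show ?thesis unfolding v_def sq_def by (simp add: infnorm_0)
qed

lemma u_comp_ai: "(\<lambda>s. u s $ i) absolutely_integrable_on {0..t}"
proof -
  have "(\<lambda>s. v s $ i) absolutely_integrable_on {0..t}"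
  proof (rule measurable_bounded_by_integrable_imp_absolutely_integrable[OF _ _ bnd_int])
    show "(\<lambda>s. v s $ i) \<in> borel_measurable (lebesgue_on {0..t})"
      by (rule borel_measurable_continuous_on[OF _ v_meas]) (auto intro!: continuous_intros)
    fix s show "norm (v s $ i) \<le> 1 + sq s"
      using component_le_infnorm_cart[of "v s" i] v_bnd[of s] by simp
  qed auto
  then show ?thesis
    by (rule absolutely_integrable_spike[OF _ negligible_sing[of 0]]) (auto simp: v_def indicator_def)
qed

lemma u_inf_ai: "(\<lambda>s. infnorm (u s)) absolutely_integrable_on {0..t}"
proof -
  have "(\<lambda>s. infnorm (v s)) absolutely_integrable_on {0..t}"
  proof (rule measurable_bounded_by_integrable_imp_absolutely_integrable[OF _ _ bnd_int])
    show "(\<lambda>s. infnorm (v s)) \<in> borel_measurable (lebesgue_on {0..t})"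
      by (rule borel_measurable_continuous_on[OF _ v_meas]) (auto intro!: continuous_intros)
    fix s show "norm (infnorm (v s)) \<le> 1 + sq s"
      using v_bnd[of s] by simp
  qed auto
  then show ?thesis
    by (rule absolutely_integrable_spike[OF _ negligible_sing[of 0]]) (auto simp: v_def indicator_def)
qed

end

locale vsys = sgp T M \<nu> + ctrl u
  for T :: "real \<Rightarrow> 'a::banach \<Rightarrow>\<^sub>L 'a" and M \<nu> :: real and u :: "real \<Rightarrow> real^'n::finite"
begin

lemma int_cmul_real: "f integrable_on S \<Longrightarrow> (\<lambda>x. c * f x :: real) integrable_on S"
  using integrable_cmul[of f S c] by simp

lemma exp_sq_int: "t \<ge> 0 \<Longrightarrow> integral {0..t} (\<lambda>s. exp (2 * \<nu> * (s - t))) \<le> 1 / (2 * \<nu>)"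
   "(\<lambda>s. exp (2 * \<nu> * (s - t))) integrable_on {0..t}"
proof -
  have d: "((\<lambda>s. exp (2 * \<nu> * (s - t)) / (2 * \<nu>)) has_vector_derivative exp (2 * \<nu> * (s - t))) (at s within {0..t})" for s
  proof -
    have "((\<lambda>s. exp (2 * \<nu> * (s - t)) / (2 * \<nu>)) has_real_derivative exp (2 * \<nu> * (s - t)) * (2 * \<nu>) / (2 * \<nu>)) (at s within {0..t})"
      by (auto intro!: derivative_eq_intros)
    then show ?thesis using nu_pos by (simp add: has_real_derivative_iff_has_vector_derivative)
  qed
  show "(\<lambda>s. exp (2 * \<nu> * (s - t))) integrable_on {0..t}"
  proof (cases "t \<ge> 0")
    case True
    then show ?thesis using fundamental_theorem_of_calculus[OF True d] by blast
  next
    case False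
    then have "{0..t} = {}" by auto
    then show ?thesis by (metis integrable_on_empty)
  qed
  assume t: "t \<ge> 0"
  have "integral {0..t} (\<lambda>s. exp (2 * \<nu> * (s - t))) = exp (2 * \<nu> * (t - t)) / (2 * \<nu>) - exp (2 * \<nu> * (0 - t)) / (2 * \<nu>)"
    using fundamental_theorem_of_calculus[OF t d] by (rule integral_unique)
  also have "\<dots> \<le> 1 / (2 * \<nu>)" using nu_pos by (simp add: divide_right_mono)
  finally show "integral {0..t} (\<lambda>s. exp (2 * \<nu> * (s - t))) \<le> 1 / (2 * \<nu>)" .
qed

lemma Eint:
  assumes t: "t \<ge> 0" and lam: "lam > 0"
  shows "(\<lambda>s. exp (- \<nu> * (t - s)) * infnorm (u s)) integrable_on {0..t}"
    "integral {0..t} (\<lambda>s. exp (- \<nu> * (t - s)) * infnorm (u s)) \<le> lam / (4 * \<nu>) + L2 / (2 * lam)"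
proof -
  have i1: "(\<lambda>s. infnorm (u s) *\<^sub>R exp (- \<nu> * (t - s))) integrable_on {0..t}"
    by (rule integrable_scaleR_cont[OF u_inf_ai]) (auto intro!: continuous_intros)
  then show i: "(\<lambda>s. exp (- \<nu> * (t - s)) * infnorm (u s)) integrable_on {0..t}"
    by (simp add: mult.commute)
  have i2: "(\<lambda>s. lam / 2 * exp (2 * \<nu> * (s - t)) + 1 / (2 * lam) * (infnorm (u s))\<^sup>2) integrable_on {0..t}"
    by (intro integrable_add int_cmul_real exp_sq_int usq_int)
  have "integral {0..t} (\<lambda>s. exp (- \<nu> * (t - s)) * infnorm (u s))
      \<le> integral {0..t} (\<lambda>s. lam / 2 * exp (2 * \<nu> * (s - t)) + 1 / (2 * lam) * (infnorm (u s))\<^sup>2)"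
  proof (rule integral_le[OF i i2])
    fix s :: real
    define a where "a = exp (- \<nu> * (t - s))"
    define b where "b = infnorm (u s)"
    have ea: "exp (2 * \<nu> * (s - t)) = a\<^sup>2" unfolding a_def
      by (simp add: power2_eq_square exp_add[symmetric] algebra_simps)
    have "0 \<le> (lam * a - b)\<^sup>2" by simp
    then have "2 * lam * (a * b) \<le> lam\<^sup>2 * a\<^sup>2 + b\<^sup>2" by (simp add: power2_eq_square algebra_simps)
    then have "a * b \<le> lam / 2 * a\<^sup>2 + 1 / (2 * lam) * b\<^sup>2" using lam
      by (simp add: field_simps power2_eq_square)
    then show "exp (- \<nu> * (t - s)) * infnorm (u s) \<le> lam / 2 * exp (2 * \<nu> * (s - t)) + 1 / (2 * lam) * (infnorm (u s))\<^sup>2"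
      unfolding ea a_def b_def .
  qed
  also have "\<dots> = lam / 2 * integral {0..t} (\<lambda>s. exp (2 * \<nu> * (s - t))) + 1 / (2 * lam) * integral {0..t} (\<lambda>s. (infnorm (u s))\<^sup>2)"
  proof -
    have ia: "(\<lambda>s. lam / 2 * exp (2 * \<nu> * (s - t))) integrable_on {0..t}" by (intro int_cmul_real exp_sq_int)
    have ib: "(\<lambda>s. 1 / (2 * lam) * (infnorm (u s))\<^sup>2) integrable_on {0..t}" by (intro int_cmul_real usq_int)
    show ?thesis by (simp only: integral_add[OF ia ib] integral_mult[OF exp_sq_int(2)] integral_mult[OF usq_int])
  qed
  also have "\<dots> \<le> lam / 2 * (1 / (2 * \<nu>)) + 1 / (2 * lam) * L2"
    using exp_sq_int(1)[OF t] usq_int_le[of t] lam by (intro add_mono mult_left_mono) auto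
  also have "\<dots> = lam / (4 * \<nu>) + L2 / (2 * lam)" by simp
  finally show "integral {0..t} (\<lambda>s. exp (- \<nu> * (t - s)) * infnorm (u s)) \<le> lam / (4 * \<nu>) + L2 / (2 * lam)" .
qed

lemma integrand_split:
  "T r (\<Sum>i\<in>UNIV. u s $ i *\<^sub>R c i s) = (\<Sum>i\<in>UNIV. u s $ i *\<^sub>R T r (c i s))"
  by (simp add: blinfun.sum_right blinfun.scaleR_right)

lemma Z_int:
  assumes t: "t \<ge> 0" and c: "\<And>i. continuous_on {0..t} (c i)"
  shows "(\<lambda>s. T (t - s) (\<Sum>i\<in>UNIV. u s $ i *\<^sub>R c i s)) integrable_on {0..t}"
  unfolding integrand_split
  by (intro integrable_sum conv_int u_comp_ai c) auto

lemma Z_bound: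
  assumes t: "t \<ge> 0" and c: "\<And>i. continuous_on {0..t} (c i)"
    and K: "\<And>i s. s \<in> {0..t} \<Longrightarrow> norm (c i s) \<le> K i" and lam: "lam > 0"
  shows "norm (integral {0..t} (\<lambda>s. T (t - s) (\<Sum>i\<in>UNIV. u s $ i *\<^sub>R c i s)))
     \<le> M * (\<Sum>i\<in>UNIV. K i) * (lam / (4 * \<nu>) + L2 / (2 * lam))"
proof -
  have K0: "K i \<ge> 0" for i using K[of 0 i] t by (meson atLeastAtMost_iff norm_ge_zero order.trans order_refl)
  have MK: "M * (\<Sum>i\<in>UNIV. K i) \<ge> 0" using M_nonneg K0 by (simp add: sum_nonneg)
  have "norm (integral {0..t} (\<lambda>s. T (t - s) (\<Sum>i\<in>UNIV. u s $ i *\<^sub>R c i s)))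
      \<le> integral {0..t} (\<lambda>s. (M * (\<Sum>i\<in>UNIV. K i)) * (exp (- \<nu> * (t - s)) * infnorm (u s)))"
  proof (rule integral_norm_bound_integral[OF Z_int[OF t c]])
    show "(\<lambda>s. (M * (\<Sum>i\<in>UNIV. K i)) * (exp (- \<nu> * (t - s)) * infnorm (u s))) integrable_on {0..t}"
      using Eint(1)[OF t zero_less_one] by (rule int_cmul_real)
    fix s assume s: "s \<in> {0..t}"
    have "norm (T (t - s) (\<Sum>i\<in>UNIV. u s $ i *\<^sub>R c i s)) \<le> (\<Sum>i\<in>UNIV. norm (u s $ i *\<^sub>R T (t - s) (c i s)))"
      unfolding integrand_split by (rule norm_sum)
    also have "\<dots> \<le> (\<Sum>i\<in>UNIV. infnorm (u s) * (M * exp (- \<nu> * (t - s)) * K i))"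
    proof (rule sum_mono)
      fix i
      have "norm (T (t - s) (c i s)) \<le> M * exp (- \<nu> * (t - s)) * norm (c i s)" using s by (intro normTx_exp) auto
      also have "\<dots> \<le> M * exp (- \<nu> * (t - s)) * K i" using K[OF s] M_nonneg by (intro mult_left_mono) auto
      finally have "\<bar>u s $ i\<bar> * norm (T (t - s) (c i s)) \<le> infnorm (u s) * (M * exp (- \<nu> * (t - s)) * K i)"
        using component_le_infnorm_cart[of "u s" i] by (intro mult_mono) (auto simp: M_nonneg K0)
      then show "norm (u s $ i *\<^sub>R T (t - s) (c i s)) \<le> infnorm (u s) * (M * exp (- \<nu> * (t - s)) * K i)" by simp
    qed
    also have "\<dots> = (M * (\<Sum>i\<in>UNIV. K i)) * (exp (- \<nu> * (t - s)) * infnorm (u s))"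
      by (simp add: sum_distrib_left sum_distrib_right algebra_simps)
    finally show "norm (T (t - s) (\<Sum>i\<in>UNIV. u s $ i *\<^sub>R c i s)) \<le> (M * (\<Sum>i\<in>UNIV. K i)) * (exp (- \<nu> * (t - s)) * infnorm (u s))" .
  qed
  also have "\<dots> = (M * (\<Sum>i\<in>UNIV. K i)) * integral {0..t} (\<lambda>s. exp (- \<nu> * (t - s)) * infnorm (u s))"
    by (rule integral_mult[OF Eint(1)[OF t zero_less_one], symmetric])
  also have "\<dots> \<le> (M * (\<Sum>i\<in>UNIV. K i)) * (lam / (4 * \<nu>) + L2 / (2 * lam))"
    using Eint(2)[OF t lam] MK by (rule mult_left_mono)
  finally show ?thesis .
qed

lemma Z_cont:
  assumes c: "\<And>i. continuous_on {0..} (c i)"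
  shows "continuous_on {0..} (\<lambda>t. integral {0..t} (\<lambda>s. T (t - s) (\<Sum>i\<in>UNIV. u s $ i *\<^sub>R c i s)))"
proof -
  have cc: "continuous_on {0..t} (c i)" for t i using c by (rule continuous_on_subset) auto
  have "continuous_on {0..} (\<lambda>t. \<Sum>i\<in>UNIV. integral {0..t} (\<lambda>s. u s $ i *\<^sub>R T (t - s) (c i s)))"
    by (intro continuous_on_sum conv_cont u_comp_ai c)
  moreover have "(\<Sum>i\<in>UNIV. integral {0..t} (\<lambda>s. u s $ i *\<^sub>R T (t - s) (c i s))) = 
      integral {0..t} (\<lambda>s. T (t - s) (\<Sum>i\<in>UNIV. u s $ i *\<^sub>R c i s))" if "t \<in> {0..}" for t
    unfolding integrand_split using that by (intro integral_sum[symmetric] conv_int u_comp_ai cc) auto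
  ultimately show ?thesis by (rule continuous_on_eq)
qed

end

definition cfun where
  "cfun N B V k i s = N i (V k s) + (if k = 0 then B (axis i 1) else 0)"

lemma ctrl_split:
  fixes B :: "(real^'n::finite) \<Rightarrow>\<^sub>L 'a::real_normed_vector"
  shows "ctrl_term N u s z + (if k = 0 then B (u s) else 0)
    = (\<Sum>i\<in>UNIV. u s $ i *\<^sub>R (N i z + (if k = 0 then B (axis i 1) else 0)))"
proof -
  have "B (u s) = B (\<Sum>i\<in>UNIV. u s $ i *\<^sub>R axis i 1)"
    using basis_expansion[of "u s"] by (simp add: scalar_mult_eq_scaleR)
  also have "\<dots> = (\<Sum>i\<in>UNIV. u s $ i *\<^sub>R B (axis i 1))"
    by (simp add: blinfun.sum_right blinfun.scaleR_right)
  finally show ?thesis unfolding ctrl_term_def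
    by (cases "k = 0") (simp_all add: scaleR_add_right sum.distrib)
qed

lemma ctrl_split2:
  fixes B :: "(real^'n::finite) \<Rightarrow>\<^sub>L 'a::real_normed_vector"
  shows "ctrl_term N u s z + B (u s) = (\<Sum>i\<in>UNIV. u s $ i *\<^sub>R (N i z + B (axis i 1)))"
  using ctrl_split[of N u s z 0 B] by simp

lemma vt_Suc: "volterra_term T N B u \<phi>0 (Suc k) t
   = integral {0..t} (\<lambda>s. T (t - s) (\<Sum>i\<in>UNIV. u s $ i *\<^sub>R cfun N B (volterra_term T N B u \<phi>0) k i s))"
  by (simp add: ctrl_split cfun_def)

lemma choose_lam:
  fixes M X \<nu> L :: real
  assumes "M \<ge> 0" "X \<ge> 0" "\<nu> > 0" "L \<ge> 0" "M * X * sqrt L < sqrt (2 * \<nu>)"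
  shows "\<exists>lam>0. M * X * (lam / (4 * \<nu>) + L / (2 * lam)) < 1"
proof (cases "L > 0")
  case True
  define a where "a = sqrt (2 * \<nu>)"
  define b where "b = sqrt L"
  have a: "a > 0" "a\<^sup>2 = 2 * \<nu>" using assms unfolding a_def by auto
  have b: "b > 0" "b\<^sup>2 = L" using assms True unfolding b_def by auto
  have e4: "4 * \<nu> = 2 * a\<^sup>2" using a(2) by simp
  have "a * b / (2 * a\<^sup>2) + b\<^sup>2 / (2 * (a * b)) = b / a" using a(1) b(1) by (simp add: field_simps power2_eq_square)
  then have "a * b / (4 * \<nu>) + L / (2 * (a * b)) = b / a" by (simp only: e4 b(2))
  moreover have "M * X * (b / a) < 1" using assms a b unfolding a_def[symmetric] b_def[symmetric]
    by (simp add: field_simps)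
  ultimately show ?thesis using a b by (intro exI[of _ "a * b"]) auto
next
  case False
  then have L: "L = 0" using assms by auto
  define lam where "lam = 2 * \<nu> / (M * X + 1)"
  have lam: "lam > 0" unfolding lam_def using assms by (simp add: add_nonneg_pos)
  have l4: "lam / (4 * \<nu>) = 1 / (2 * (M * X + 1))"
  proof -
    obtain m where m: "m = M * X + 1" by blast
    have "m > 0" unfolding m using assms by (simp add: add_nonneg_pos)
    then have "2 * \<nu> / m / (4 * \<nu>) = 1 / (2 * m)" using assms by (simp add: field_simps)
    then show ?thesis unfolding lam_def m .
  qed
  have "M * X * (lam / (4 * \<nu>) + L / (2 * lam)) = M * X / (2 * (M * X + 1))"
    unfolding L l4 by simp
  also have "\<dots> < 1"
  proof -
    have "M * X \<ge> 0" using assms by simp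
    then show ?thesis by (simp add: divide_less_eq_1_pos add_nonneg_pos)
  qed
  finally show ?thesis using lam by blast
qed

context vsys begin

lemma main:
  fixes N :: "'n \<Rightarrow> 'a \<Rightarrow>\<^sub>L 'a" and B :: "(real^'n) \<Rightarrow>\<^sub>L 'a" and \<phi>0 :: 'a
  assumes u_small: "M * (\<Sum>i\<in>UNIV. norm (N i)) * sqrt L2 < sqrt (2 * \<nu>)"
  shows "\<exists>\<zeta>. uniform_limit {0<..} (\<lambda>K t. \<Sum>m<K. volterra_term T N B u \<phi>0 m t) \<zeta> sequentially
             \<and> (\<forall>t>0. ((\<lambda>s. T (t - s) (ctrl_term N u s (\<zeta> s) + B (u s))) has_integral (\<zeta> t - T t \<phi>0)) {0..t})"
proof -
  define V where "V = volterra_term T N B u \<phi>0"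
  define X where "X = (\<Sum>i\<in>UNIV. norm (N i))"
  have X0: "X \<ge> 0" unfolding X_def by (simp add: sum_nonneg)
  obtain lam where lam: "lam > 0" and q1: "M * X * (lam / (4 * \<nu>) + L2 / (2 * lam)) < 1"
    using choose_lam[OF M_nonneg X0 nu_pos L2_nonneg u_small[folded X_def]] by blast
  define E where "E = lam / (4 * \<nu>) + L2 / (2 * lam)"
  have E0: "E \<ge> 0" unfolding E_def using lam nu_pos L2_nonneg by auto
  define q where "q = M * X * E"
  have q: "q < 1" "q \<ge> 0" unfolding q_def E_def using q1 apply simp
    using M_nonneg X0 E0 unfolding E_def by simp
  have VS: "V (Suc k) t = integral {0..t} (\<lambda>s. T (t - s) (\<Sum>i\<in>UNIV. u s $ i *\<^sub>R cfun N B V k i s))" for k t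
    unfolding V_def by (rule vt_Suc)
  have Ncont: "continuous_on S (\<lambda>s. N i (f s))" if "continuous_on S f" for S f i
    using that by (intro continuous_intros) 
  have cont: "continuous_on {0..} (V k)" for k
  proof (induction k)
    case 0
    then show ?case unfolding V_def by (simp add: T_cont)
  next
    case (Suc k)
    have "continuous_on {0..} (\<lambda>t. integral {0..t} (\<lambda>s. T (t - s) (\<Sum>i\<in>UNIV. u s $ i *\<^sub>R cfun N B V k i s)))"
      unfolding cfun_def by (intro Z_cont continuous_intros Ncont Suc)
    then show ?case unfolding VS[abs_def] .
  qed
  have ccont: "continuous_on S (cfun N B V k i)" if "S \<subseteq> {0..}" for S k i
    unfolding cfun_def by (intro continuous_intros Ncont continuous_on_subset[OF cont that])
  define S0 where "S0 = M * norm \<phi>0"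
  define C1 where "C1 = M * (\<Sum>i\<in>UNIV. norm (N i) * S0 + norm (B (axis i 1))) * E"
  have b0: "norm (V 0 t) \<le> S0" if "t \<ge> 0" for t unfolding V_def S0_def using normTx that by simp
  have b1: "norm (V (Suc 0) t) \<le> C1" if t: "t \<ge> 0" for t
  proof -
    have "norm (V (Suc 0) t) \<le> M * (\<Sum>i\<in>UNIV. norm (N i) * S0 + norm (B (axis i 1))) * (lam / (4 * \<nu>) + L2 / (2 * lam))"
      unfolding VS
    proof (rule Z_bound[OF t ccont _ lam])
      fix i s assume s: "s \<in> {0..t}"
      have "norm (N i (V 0 s)) \<le> norm (N i) * norm (V 0 s)" by (rule norm_blinfun)
      also have "\<dots> \<le> norm (N i) * S0" using b0[of s] s by (intro mult_left_mono) auto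
      finally show "norm (cfun N B V 0 i s) \<le> norm (N i) * S0 + norm (B (axis i 1))"
        unfolding cfun_def by (simp add: norm_triangle_le add_mono)
    qed auto
    then show ?thesis unfolding C1_def E_def .
  qed
  have bk: "norm (V (Suc k) t) \<le> C1 * q ^ k" if t: "t \<ge> 0" for k t
    using t
  proof (induction k arbitrary: t)
    case 0 then show ?case using b1 by simp
  next
    case (Suc k)
    have "norm (V (Suc (Suc k)) t) \<le> M * (\<Sum>i\<in>UNIV. norm (N i) * (C1 * q ^ k)) * (lam / (4 * \<nu>) + L2 / (2 * lam))"
      unfolding VS
    proof (rule Z_bound[OF Suc.prems ccont _ lam])
      fix i s assume s: "s \<in> {0..t}"
      have "norm (N i (V (Suc k) s)) \<le> norm (N i) * norm (V (Suc k) s)" by (rule norm_blinfun)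
      also have "\<dots> \<le> norm (N i) * (C1 * q ^ k)" using Suc.IH[of s] s by (intro mult_left_mono) auto
      finally show "norm (cfun N B V (Suc k) i s) \<le> norm (N i) * (C1 * q ^ k)"
        unfolding cfun_def by simp
    qed auto
    also have "\<dots> = C1 * q ^ Suc k"
    proof -
      have sX: "(\<Sum>i\<in>UNIV. norm (N i) * (C1 * q ^ k)) = X * (C1 * q ^ k)" unfolding X_def by (simp add: sum_distrib_right)
      have qe: "q = M * X * E" by (simp add: q_def)
      show ?thesis unfolding sX E_def[symmetric] by (simp only: power_Suc qe) (simp add: algebra_simps)
    qed
    finally show ?case .
  qed
  define bd where "bd m = (if m = 0 then S0 else C1 * q ^ (m - 1))" for m
  have bd: "norm (V m t) \<le> bd m" if "t \<in> {0..}" for m t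
    using that b0 bk unfolding bd_def by (cases m) auto
  have "summable (\<lambda>m. bd (Suc m))" unfolding bd_def using q by (simp add: summable_mult summable_geometric)
  then have sbd: "summable bd" by (simp add: summable_Suc_iff)
  define Z where "Z t = (\<Sum>m. V m t)" for t
  have ul: "uniform_limit {0..} (\<lambda>K t. \<Sum>m<K. V m t) Z sequentially"
    unfolding Z_def by (rule Weierstrass_m_test[OF bd sbd])
  have Zcont: "continuous_on {0..} Z"
    by (rule uniform_limit_theorem[OF _ ul]) (auto intro!: always_eventually continuous_on_sum cont)
  have eq: "((\<lambda>s. T (t - s) (ctrl_term N u s (Z s) + B (u s))) has_integral (Z t - T t \<phi>0)) {0..t}"
    if t: "t > 0" for t
  proof -
    define F where "F s = T (t - s) (\<Sum>i\<in>UNIV. u s $ i *\<^sub>R (N i (Z s) + B (axis i 1)))" for s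
    have Fi: "F integrable_on {0..t}" unfolding F_def
      using t by (intro Z_int continuous_intros Ncont continuous_on_subset[OF Zcont]) auto
    define P where "P K s = (\<Sum>m<K. V m s)" for K s
    define I where "I K = integral {0..t} (\<lambda>s. T (t - s) (\<Sum>i\<in>UNIV. u s $ i *\<^sub>R (N i (P K s) + B (axis i 1))))" for K
    have sumc: "(\<Sum>m<Suc K. cfun N B V m i s) = N i (P (Suc K) s) + B (axis i 1)" for K i s
    proof (induction K)
      case 0 then show ?case by (simp add: cfun_def P_def)
    next
      case (Suc K)
      show ?case using Suc by (simp add: cfun_def P_def blinfun.add_right)
    qed
    have PI: "P (Suc (Suc K)) t - T t \<phi>0 = I (Suc K)" for K
    proof -
      have "P (Suc (Suc K)) t - T t \<phi>0 = (\<Sum>m<Suc K. V (Suc m) t)"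
        unfolding P_def by (subst sum.lessThan_Suc_shift) (simp add: V_def)
      also have "\<dots> = (\<Sum>m<Suc K. integral {0..t} (\<lambda>s. T (t - s) (\<Sum>i\<in>UNIV. u s $ i *\<^sub>R cfun N B V m i s)))"
        by (simp add: VS)
      also have "\<dots> = integral {0..t} (\<lambda>s. \<Sum>m<Suc K. T (t - s) (\<Sum>i\<in>UNIV. u s $ i *\<^sub>R cfun N B V m i s))"
        using t by (intro integral_sum[symmetric] Z_int ccont) auto
      also have "\<dots> = integral {0..t} (\<lambda>s. T (t - s) (\<Sum>i\<in>UNIV. u s $ i *\<^sub>R (\<Sum>m<Suc K. cfun N B V m i s)))"
      proof -
        have "(\<Sum>m<Suc K. T (t - s) (\<Sum>i\<in>UNIV. u s $ i *\<^sub>R cfun N B V m i s))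
          = T (t - s) (\<Sum>i\<in>UNIV. u s $ i *\<^sub>R (\<Sum>m<Suc K. cfun N B V m i s))" for s
        proof -
          have "(\<Sum>i\<in>UNIV. u s $ i *\<^sub>R (\<Sum>m<Suc K. cfun N B V m i s))
              = (\<Sum>m<Suc K. \<Sum>i\<in>UNIV. u s $ i *\<^sub>R cfun N B V m i s)"
            by (simp only: scaleR_sum_right) (rule sum.swap)
          then show ?thesis by (simp only: blinfun.sum_right)
        qed
        then show ?thesis by simp
      qed
      also have "\<dots> = I (Suc K)" unfolding I_def sumc ..
      finally show ?thesis .
    qed
    have lim1: "(\<lambda>K. P (Suc (Suc K)) t - T t \<phi>0) \<longlonglongrightarrow> Z t - T t \<phi>0"
    proof -
      have "summable (\<lambda>m. V m t)" using bd[of t] t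
        by (intro summable_comparison_test[OF _ sbd]) auto
      then have "(\<lambda>K. P K t) \<longlonglongrightarrow> Z t" unfolding P_def Z_def
        using summable_LIMSEQ by blast
      from tendsto_diff[OF LIMSEQ_Suc[OF LIMSEQ_Suc[OF this]] tendsto_const[of "T t \<phi>0"]]
      show ?thesis .
    qed
    have lim2: "(\<lambda>K. I (Suc K)) \<longlonglongrightarrow> integral {0..t} F"
      unfolding tendsto_iff
    proof (intro allI impI)
      fix e :: real assume e: "e > 0"
      define e' where "e' = e / (q + 1)"
      have e': "e' > 0" using e q unfolding e'_def by auto
      have "\<forall>\<^sub>F K in sequentially. \<forall>s\<in>{0..}. dist (P K s) (Z s) < e'"
        using uniform_limitD[OF ul e'] unfolding P_def .
      then have ev: "\<forall>\<^sub>F K in sequentially. \<forall>s\<in>{0..}. dist (P (Suc K) s) (Z s) < e'"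
        by (rule eventually_sequentially_Suc[THEN iffD2])
      show "\<forall>\<^sub>F K in sequentially. dist (I (Suc K)) (integral {0..t} F) < e"
        using ev
      proof (rule eventually_mono)
        fix K assume K: "\<forall>s\<in>{0..}. dist (P (Suc K) s) (Z s) < e'"
        have PKi: "(\<lambda>s. T (t - s) (\<Sum>i\<in>UNIV. u s $ i *\<^sub>R (N i (P (Suc K) s) + B (axis i 1)))) integrable_on {0..t}"
          unfolding P_def using t by (intro Z_int continuous_intros Ncont continuous_on_subset[OF cont]) auto
        have "I (Suc K) - integral {0..t} F
          = integral {0..t} (\<lambda>s. T (t - s) (\<Sum>i\<in>UNIV. u s $ i *\<^sub>R N i (P (Suc K) s - Z s)))"
          unfolding I_def using integral_diff[OF PKi Fi]
          by (simp add: F_def blinfun.diff_right[symmetric] sum_subtractf[symmetric] scaleR_diff_right[symmetric])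
        also have "norm \<dots> \<le> M * (\<Sum>i\<in>UNIV. norm (N i) * e') * (lam / (4 * \<nu>) + L2 / (2 * lam))"
        proof (rule Z_bound[OF _ _ _ lam])
          show "0 \<le> t" using t by simp
          show "continuous_on {0..t} (\<lambda>s. N i (P (Suc K) s - Z s))" for i
            unfolding P_def by (intro continuous_intros Ncont continuous_on_subset[OF cont] continuous_on_subset[OF Zcont]) auto
          fix i s assume s: "s \<in> {0..t}"
          have "norm (N i (P (Suc K) s - Z s)) \<le> norm (N i) * norm (P (Suc K) s - Z s)" by (rule norm_blinfun)
          also have "\<dots> \<le> norm (N i) * e'" using K s by (intro mult_left_mono) (auto simp: dist_norm less_imp_le)
          finally show "norm (N i (P (Suc K) s - Z s)) \<le> norm (N i) * e'" .
        qed
        also have "\<dots> = q * e'"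
        proof -
          have sX: "(\<Sum>i\<in>UNIV. norm (N i) * e') = X * e'" unfolding X_def by (simp add: sum_distrib_right)
          show ?thesis unfolding sX E_def[symmetric] q_def by (simp add: algebra_simps)
        qed
        also have "\<dots> < e" using q e unfolding e'_def by (simp add: field_simps)
        finally show "dist (I (Suc K)) (integral {0..t} F) < e" by (simp add: dist_norm)
      qed
    qed
    have Zeq: "Z t - T t \<phi>0 = integral {0..t} F"
      using LIMSEQ_unique[OF lim1 lim2[folded PI]] .
    have Feq: "F = (\<lambda>s. T (t - s) (ctrl_term N u s (Z s) + B (u s)))"
      unfolding F_def ctrl_split2 ..
    have "(F has_integral (Z t - T t \<phi>0)) {0..t}" unfolding Zeq by (rule integrable_integral[OF Fi])
    then show ?thesis unfolding Feq .
  qed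
  show ?thesis
    by (intro exI[of _ Z] conjI uniform_limit_on_subset[OF ul[unfolded V_def]] allI impI eq) auto
qed

end

typedef 'a hw = "UNIV :: 'a::real_normed_vector set" morphisms hrep habs by auto

setup_lifting type_definition_hw

instantiation hw :: (real_normed_vector) real_vector
begin
lift_definition zero_hw :: "'a hw" is 0 .
lift_definition plus_hw :: "'a hw \<Rightarrow> 'a hw \<Rightarrow> 'a hw" is "(+)" .
lift_definition minus_hw :: "'a hw \<Rightarrow> 'a hw \<Rightarrow> 'a hw" is "(-)" .
lift_definition uminus_hw :: "'a hw \<Rightarrow> 'a hw" is uminus .
lift_definition scaleR_hw :: "real \<Rightarrow> 'a hw \<Rightarrow> 'a hw" is scaleR .
instance
proof
  fix x y z :: "'a hw" and a b :: real
  show "x + y + z = x + (y + z)" by transfer (simp add: add.assoc)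
  show "x + y = y + x" by transfer (simp add: add.commute)
  show "0 + x = x" by transfer simp
  show "- x + x = 0" by transfer simp
  show "x - y = x + - y" by transfer simp
  show "a *\<^sub>R (x + y) = a *\<^sub>R x + a *\<^sub>R y" by transfer (simp add: scaleR_add_right)
  show "(a + b) *\<^sub>R x = a *\<^sub>R x + b *\<^sub>R x" by transfer (simp add: scaleR_add_left)
  show "a *\<^sub>R b *\<^sub>R x = (a * b) *\<^sub>R x" by transfer simp
  show "1 *\<^sub>R x = x" by transfer simp
qed
end

instantiation hw :: (real_normed_vector) real_normed_vector
begin
lift_definition norm_hw :: "'a hw \<Rightarrow> real" is norm .
lift_definition dist_hw :: "'a hw \<Rightarrow> 'a hw \<Rightarrow> real" is dist .
lift_definition sgn_hw :: "'a hw \<Rightarrow> 'a hw" is sgn .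
definition uniformity_hw :: "('a hw \<times> 'a hw) filter"
  where "uniformity_hw = (INF e\<in>{0 <..}. principal {(x, y). dist x y < e})"
definition open_hw :: "'a hw set \<Rightarrow> bool"
  where "open_hw S = (\<forall>x\<in>S. \<forall>\<^sub>F (x', y) in uniformity. x' = x \<longrightarrow> y \<in> S)"
instance
proof
  fix x y z :: "'a hw" and a b :: real
  show "dist x y = norm (x - y)" by transfer (simp add: dist_norm)
  show "norm x = 0 \<longleftrightarrow> x = 0" by transfer simp
  show "norm (x + y) \<le> norm x + norm y" by transfer (rule norm_triangle_ineq)
  show "norm (a *\<^sub>R x) = \<bar>a\<bar> * norm x" by transfer simp
  show "sgn x = x /\<^sub>R norm x" by transfer (simp add: sgn_div_norm)
qed (rule uniformity_hw_def open_hw_def)+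
end

lemma rep_add: "hrep (x + y) = hrep x + hrep y" by transfer simp
lemma rep_diff: "hrep (x - y) = hrep x - hrep y" by transfer simp
lemma rep_scaleR: "hrep (a *\<^sub>R x) = a *\<^sub>R hrep x" by transfer simp
lemma rep_zero: "hrep 0 = 0" by transfer simp
lemma norm_rep: "norm (hrep x) = norm x" by transfer simp
lemma dist_rep: "dist (hrep x) (hrep y) = dist x y" by transfer simp
lemma abs_add: "habs (x + y) = habs x + habs y" by transfer simp
lemma abs_diff: "habs (x - y) = habs x - habs y" by transfer simp
lemma abs_scaleR: "habs (a *\<^sub>R x) = a *\<^sub>R habs x" by transfer simp
lemma abs_zero: "habs 0 = 0" by transfer simp
lemma norm_abs: "norm (habs x) = norm x" by transfer simp

lemma bl_rep: "bounded_linear hrep"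
  by (rule bounded_linear_intro[of _ 1]) (auto simp: rep_add rep_scaleR norm_rep)
lemma bl_abs: "bounded_linear habs"
  by (rule bounded_linear_intro[of _ 1]) (auto simp: abs_add abs_scaleR norm_abs)

instance hw :: ("{real_normed_vector,complete_space}") complete_space
proof
  fix X :: "nat \<Rightarrow> 'a hw" assume X: "Cauchy X"
  have "Cauchy (\<lambda>n. hrep (X n))" using X unfolding Cauchy_def dist_rep .
  then obtain L where L: "(\<lambda>n. hrep (X n)) \<longlonglongrightarrow> L" using convergent_eq_Cauchy[symmetric] convergent_def by blast
  have "(\<lambda>n. habs (hrep (X n))) \<longlonglongrightarrow> habs L" by (rule bounded_linear.tendsto[OF bl_abs L])
  then show "convergent X" unfolding convergent_def by (auto simp: hrep_inverse)
qed

instance hw :: ("{real_normed_vector,complete_space}") banach ..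

lemma rep_sum: "hrep (\<Sum>i\<in>A. f i) = (\<Sum>i\<in>A. hrep (f i))"
  by (rule linear_sum[OF bounded_linear.linear[OF bl_rep]])
lemma abs_sum: "habs (\<Sum>i\<in>A. f i) = (\<Sum>i\<in>A. habs (f i))"
  by (rule linear_sum[OF bounded_linear.linear[OF bl_abs]])

lemma hrep_habs[simp]: "hrep (habs y) = y" by (simp add: habs_inverse)

lemma int_habs: "integral S (\<lambda>s. habs (G s)) = habs (integral S G)"
  for G :: "'n::euclidean_space \<Rightarrow> 'a::real_normed_vector"
proof (cases "G integrable_on S")
  case True
  then show ?thesis using integral_linear[OF True bl_abs] by (simp add: o_def)
next
  case False
  have "\<not> (\<lambda>s. habs (G s)) integrable_on S"
  proof
    assume "(\<lambda>s. habs (G s)) integrable_on S"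
    from integrable_linear[OF this bl_rep] have "G integrable_on S" by (simp add: o_def)
    then show False using False by simp
  qed
  then show ?thesis using False by (simp add: not_integrable_integral abs_zero)
qed

definition conjb :: "('a::real_normed_vector \<Rightarrow>\<^sub>L 'b::real_normed_vector) \<Rightarrow> ('a hw \<Rightarrow>\<^sub>L 'b hw)"
  where "conjb A = Blinfun (\<lambda>x. habs (A (hrep x)))"

lemma conjb_apply: "conjb A x = habs (A (hrep x))"
proof -
  have "bounded_linear (\<lambda>x. habs (A (hrep x)))"
    using bounded_linear_compose[OF bl_abs bounded_linear_compose[OF blinfun.bounded_linear_right bl_rep]] .
  then show ?thesis unfolding conjb_def by (simp add: bounded_linear_Blinfun_apply)
qed

lemma norm_conjb: "norm (conjb A) \<le> norm A"
  by (rule norm_blinfun_bound) (auto simp: conjb_apply norm_abs norm_rep[symmetric] norm_blinfun)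

definition absb :: "('a::real_normed_vector \<Rightarrow>\<^sub>L 'b::real_normed_vector) \<Rightarrow> ('a \<Rightarrow>\<^sub>L 'b hw)"
  where "absb A = Blinfun (\<lambda>x. habs (A x))"

lemma absb_apply: "absb A x = habs (A x)"
proof -
  have "bounded_linear (\<lambda>x. habs (A x))"
    using bounded_linear_compose[OF bl_abs blinfun.bounded_linear_right] .
  then show ?thesis unfolding absb_def by (simp add: bounded_linear_Blinfun_apply)
qed

theorem lemmaA1:
  fixes T :: "real \<Rightarrow> ('a::{real_inner, complete_space}) \<Rightarrow>\<^sub>L 'a"
    and N :: "'n::finite \<Rightarrow> 'a \<Rightarrow>\<^sub>L 'a"
    and B :: "(real^'n) \<Rightarrow>\<^sub>L 'a"
    and u :: "real \<Rightarrow> real^'n"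
    and \<phi>0 :: 'a
    and M \<nu> :: real
  assumes sg: "C0_semigroup T"
    and bound: "\<forall>t\<ge>0. norm (T t) \<le> M * exp (- \<nu> * t)"
    and nu_pos: "\<nu> > 0"
    and u_meas: "set_borel_measurable lborel {0<..} u"
    and u_L2: "set_integrable lborel {0<..} (\<lambda>s. (infnorm (u s))\<^sup>2)"
    and u_small: "M * (\<Sum>i\<in>UNIV. norm (N i)) * control_L2_norm u < sqrt (2 * \<nu>)"
  shows "\<exists>\<zeta>. uniform_limit {0<..} (\<lambda>K t. \<Sum>m<K. volterra_term T N B u \<phi>0 m t) \<zeta> sequentially
             \<and> (\<forall>t>0. ((\<lambda>s. T (t - s) (ctrl_term N u s (\<zeta> s) + B (u s))) has_integral (\<zeta> t - T t \<phi>0)) {0..t})"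
proof -
  define T' where "T' t = conjb (T t)" for t
  define N' where "N' i = conjb (N i)" for i
  define B' where "B' = absb B"
  define \<phi>' where "\<phi>' = habs \<phi>0"
  have T'a: "T' t x = habs (T t (hrep x))" for t x unfolding T'_def conjb_apply ..
  have N'a: "N' i x = habs (N i (hrep x))" for i x unfolding N'_def conjb_apply ..
  have B'a: "B' v = habs (B v)" for v unfolding B'_def absb_apply ..
  have sg': "C0_semigroup T'"
    unfolding C0_semigroup_def
  proof (intro conjI allI impI)
    show "T' 0 = id_blinfun"
      using sg unfolding C0_semigroup_def by (intro blinfun_eqI) (simp add: T'a hrep_inverse)
    fix t s :: real assume ts: "0 \<le> t" "0 \<le> s"
    show "T' (t + s) = T' t o\<^sub>L T' s"
      using sg ts unfolding C0_semigroup_def by (intro blinfun_eqI) (simp add: T'a)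
  next
    fix x
    have "((\<lambda>t. T t (hrep x)) \<longlongrightarrow> hrep x) (at_right 0)" using sg unfolding C0_semigroup_def by blast
    from bounded_linear.tendsto[OF bl_abs this]
    show "((\<lambda>t. T' t x) \<longlongrightarrow> x) (at_right 0)" by (simp add: T'a hrep_inverse)
  qed
  have bound': "\<forall>t\<ge>0. norm (T' t) \<le> M * exp (- \<nu> * t)"
    using bound norm_conjb[of "T _"] unfolding T'_def by (meson order_trans)
  interpret V: vsys T' M \<nu> u
    by unfold_locales (rule sg' bound' nu_pos u_meas u_L2)+
  have L2eq: "control_L2_norm u = sqrt V.L2" unfolding control_L2_norm_def V.L2_def ..
  have small': "M * (\<Sum>i\<in>UNIV. norm (N' i)) * sqrt V.L2 < sqrt (2 * \<nu>)"
  proof -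
    have "(\<Sum>i\<in>UNIV. norm (N' i)) \<le> (\<Sum>i\<in>UNIV. norm (N i))"
      unfolding N'_def by (intro sum_mono norm_conjb)
    then have "M * (\<Sum>i\<in>UNIV. norm (N' i)) * sqrt V.L2 \<le> M * (\<Sum>i\<in>UNIV. norm (N i)) * sqrt V.L2"
      using V.M_nonneg V.L2_nonneg by (intro mult_right_mono mult_left_mono) auto
    then show ?thesis using u_small unfolding L2eq by linarith
  qed
  obtain Z where Zul: "uniform_limit {0<..} (\<lambda>K t. \<Sum>m<K. volterra_term T' N' B' u \<phi>' m t) Z sequentially"
    and Zeq: "\<And>t. t > 0 \<Longrightarrow> ((\<lambda>s. T' (t - s) (ctrl_term N' u s (Z s) + B' (u s))) has_integral (Z t - T' t \<phi>')) {0..t}"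
    using V.main[OF small'] by blast
  have ctrl': "ctrl_term N' u s (habs z) = habs (ctrl_term N u s z)" for s z
    unfolding ctrl_term_def by (simp add: N'a abs_sum abs_scaleR)
  have ctrl'': "hrep (ctrl_term N' u s z) = ctrl_term N u s (hrep z)" for s z
    unfolding ctrl_term_def by (simp add: N'a rep_sum rep_scaleR)
  have vt: "volterra_term T' N' B' u \<phi>' m t = habs (volterra_term T N B u \<phi>0 m t)" for m t
  proof (induction m arbitrary: t)
    case 0 then show ?case by (simp add: T'a \<phi>'_def)
  next
    case (Suc m)
    have "(\<lambda>s. T' (t - s) (ctrl_term N' u s (volterra_term T' N' B' u \<phi>' m s) + (if m = 0 then B' (u s) else 0)))
       = (\<lambda>s. habs (T (t - s) (ctrl_term N u s (volterra_term T N B u \<phi>0 m s) + (if m = 0 then B (u s) else 0))))"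
      by (rule ext) (simp add: Suc ctrl' B'a T'a rep_add rep_zero)
    then show ?case by (simp add: int_habs)
  qed
  show ?thesis
  proof (intro exI[of _ "\<lambda>t. hrep (Z t)"] conjI allI impI)
    show "uniform_limit {0<..} (\<lambda>K t. \<Sum>m<K. volterra_term T N B u \<phi>0 m t) (\<lambda>t. hrep (Z t)) sequentially"
      unfolding uniform_limit_iff
    proof (intro allI impI)
      fix e :: real assume e: "e > 0"
      show "\<forall>\<^sub>F n in sequentially. \<forall>x\<in>{0<..}. dist (\<Sum>m<n. volterra_term T N B u \<phi>0 m x) (hrep (Z x)) < e"
        using uniform_limitD[OF Zul e]
      proof (rule eventually_mono)
        fix n assume "\<forall>x\<in>{0<..}. dist (\<Sum>m<n. volterra_term T' N' B' u \<phi>' m x) (Z x) < e"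
        then show "\<forall>x\<in>{0<..}. dist (\<Sum>m<n. volterra_term T N B u \<phi>0 m x) (hrep (Z x)) < e"
          by (simp add: vt dist_rep[symmetric] rep_sum)
      qed
    qed
    fix t :: real assume t: "t > 0"
    from has_integral_linear[OF Zeq[OF t] bl_rep]
    show "((\<lambda>s. T (t - s) (ctrl_term N u s (hrep (Z s)) + B (u s))) has_integral (hrep (Z t) - T t \<phi>0)) {0..t}"
      by (simp add: o_def T'a rep_add rep_diff ctrl'' B'a \<phi>'_def)
  qed
qed

end
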